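(* Let $f(x)=\sqrt{1-x^2}$ on $[-1,1]$. For each integer $n\geq 0$ let $p_n^{L_1}$ be the best $L_1$ polynomial approximant of degree $\leq n$ to $f$ and $p_n^{L_\infty}$ the best $L_\infty$ (minimax) polynomial approximant of degree $\leq n$ to $f$, and let \[ \Omega_n=\Big\{x\in[-1,1]:|f(x)-p_n^{L_1}(x)|\geq\tfrac12\|f-p_n^{L_\infty}\|_\infty\Big\}. \] Then $|\Omega_n|=\mathcal{O}(n^{-2}\log n)$ as $n\to\infty$, where $|\cdot|$ denotes Lebesgue measure.
   Context: $p_n^{L_1}$ minimizes $\int_{-1}^1|f(x)-q(x)|\,dx$ and $p_n^{L_\infty}$ minimizes $\max_{x\in[-1,1]}|f(x)-q(x)|$ over real polynomials $q$ of degree $\leq n$; $\|g\|_\infty=\max_{x\in[-1,1]}|g(x)|$. *)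

theory Defs
  imports "HOL-Analysis.Analysis" "HOL-Computational_Algebra.Polynomial" "HOL-Library.Landau_Symbols"
begin

definition f_circ :: "real \<Rightarrow> real" where
  "f_circ x = sqrt (1 - x\<^sup>2)"

definition L1_dist :: "(real \<Rightarrow> real) \<Rightarrow> real poly \<Rightarrow> real" where
  "L1_dist f q = integral {-1..1} (\<lambda>x. \<bar>f x - poly q x\<bar>)"

definition sup_dist :: "(real \<Rightarrow> real) \<Rightarrow> real poly \<Rightarrow> real" where
  "sup_dist f q = (SUP x\<in>{-1..1}. \<bar>f x - poly q x\<bar>)"

definition is_best_L1 :: "(real \<Rightarrow> real) \<Rightarrow> nat \<Rightarrow> real poly \<Rightarrow> bool" where
  "is_best_L1 f n p \<longleftrightarrow> degree p \<le> n \<and> (\<forall>q. degree q \<le> n \<longrightarrow> L1_dist f p \<le> L1_dist f q)"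

definition is_best_Linf :: "(real \<Rightarrow> real) \<Rightarrow> nat \<Rightarrow> real poly \<Rightarrow> bool" where
  "is_best_Linf f n p \<longleftrightarrow> degree p \<le> n \<and> (\<forall>q. degree q \<le> n \<longrightarrow> sup_dist f p \<le> sup_dist f q)"

end

theory Submission
  imports Defs
begin

lemma ftc_real:
  fixes F f :: "real \<Rightarrow> real"
  assumes "a \<le> b" and "\<And>x. (F has_real_derivative f x) (at x)"
  shows "(f has_integral (F b - F a)) {a..b}"
  apply (rule fundamental_theorem_of_calculus[OF assms(1)])
  using assms(2) by (metis has_field_derivative_at_within has_real_derivative_iff_has_vector_derivative)

lemma cos_int_zero:
  assumes "k \<ge> 1"
  shows "((\<lambda>t. cos (real k * t)) has_integral 0) {0..pi}"
proof -
  have "((\<lambda>t. cos (real k * t)) has_integral ((\<lambda>t. sin (real k * t) / real k) pi - (\<lambda>t. sin (real k * t) / real k) 0)) {0..pi}"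
    apply (rule ftc_real)
    using pi_ge_zero apply simp
    using assms by (auto intro!: derivative_eq_intros)
  then show ?thesis by simp
qed

lemma cos_int_zero_int:
  assumes "d \<noteq> 0"
  shows "((\<lambda>t. cos (real_of_int d * t)) has_integral 0) {0..pi}"
proof -
  have "((\<lambda>t. cos (real_of_int d * t)) has_integral ((\<lambda>t. sin (real_of_int d * t) / real_of_int d) pi - (\<lambda>t. sin (real_of_int d * t) / real_of_int d) 0)) {0..pi}"
    apply (rule ftc_real)
    using pi_ge_zero apply simp
    using assms by (auto intro!: derivative_eq_intros)
  moreover have "sin (real_of_int d * pi) = 0"
    by (metis mult.commute sin_npi_int)
  ultimately show ?thesis by simp
qed

lemma cos_pow_orth:
  "\<forall>k. k > i \<longrightarrow> ((\<lambda>t. cos t ^ i * cos (real k * t)) has_integral 0) {0..pi}"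
proof (induction i)
  case 0
  then show ?case using cos_int_zero by auto
next
  case (Suc i)
  show ?case
  proof (intro allI impI)
    fix k assume k: "Suc i < k"
    have e: "(cos t ^ i * cos (real (k+1) * t) + cos t ^ i * cos (real (k-1) * t)) / 2
           = cos t ^ Suc i * cos (real k * t)" for t
    proof -
      have "real (k+1) * t = real k * t + t" by (simp add: algebra_simps)
      moreover have "real (k-1) * t = real k * t - t" using k by (simp add: of_nat_diff algebra_simps)
      ultimately have "cos (real (k+1) * t) + cos (real (k-1) * t) = 2 * cos t * cos (real k * t)"
        by (simp only: cos_add cos_diff) simp
      then show ?thesis by (simp add: algebra_simps) (metis distrib_left mult.assoc mult.commute)
    qed
    have "((\<lambda>t. (cos t ^ i * cos (real (k+1) * t) + cos t ^ i * cos (real (k-1) * t)) / 2) has_integral (0 + 0) / 2) {0..pi}"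
      apply (rule has_integral_divide)
      apply (rule has_integral_add)
    proof -
      have "i < k+1" "i < k-1" using k by auto
      then show "((\<lambda>t. cos t ^ i * cos (real (k+1) * t)) has_integral 0) {0..pi}"
        "((\<lambda>t. cos t ^ i * cos (real (k-1) * t)) has_integral 0) {0..pi}"
        using Suc.IH by blast+
    qed
    then show "((\<lambda>t. cos t ^ Suc i * cos (real k * t)) has_integral 0) {0..pi}"
      using e by simp
  qed
qed

lemma poly_cos_orth:
  fixes p :: "real poly"
  assumes "degree p < k"
  shows "((\<lambda>t. poly p (cos t) * cos (real k * t)) has_integral 0) {0..pi}"
proof -
  have "((\<lambda>t. \<Sum>i\<le>degree p. coeff p i * (cos t ^ i * cos (real k * t))) has_integral (\<Sum>i\<le>degree p. coeff p i * 0)) {0..pi}"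
    apply (rule has_integral_sum, simp)
    apply (rule has_integral_mult_right)
    using cos_pow_orth assms by auto
  then show ?thesis
    by (simp add: poly_altdef sum_distrib_right mult.assoc)
qed

lemma sin_cos_int:
  assumes "even k"
  shows "((\<lambda>t. sin t * cos (real k * t)) has_integral (-2 / ((real k)^2 - 1))) {0..pi}"
proof -
  define G where "G t = (cos t * cos (real k * t) + real k * sin t * sin (real k * t)) / ((real k)^2 - 1)" for t
  have k1: "(real k)^2 - 1 \<noteq> 0"
  proof (cases "k = 0")
    case False
    then have "k \<ge> 2" using assms by presburger
    then have "real k \<ge> 2" by simp
    then have "(real k)^2 \<ge> 2^2" by (rule power_mono) simp
    then show ?thesis by simp
  qed simp
  have d: "(G has_real_derivative sin t * cos (real k * t)) (at t)" for t
  proof -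
    have "(G has_real_derivative (-sin t * cos (real k * t) - cos t * (sin (real k * t) * real k)
        + real k * cos t * sin (real k * t) + real k * sin t * (cos (real k * t) * real k)) / ((real k)^2 - 1)) (at t)"
      unfolding G_def using k1 by (auto intro!: derivative_eq_intros)
    moreover have "(-sin t * cos (real k * t) - cos t * (sin (real k * t) * real k)
        + real k * cos t * sin (real k * t) + real k * sin t * (cos (real k * t) * real k)) / ((real k)^2 - 1)
        = sin t * cos (real k * t)"
      using k1 by (simp add: field_simps power2_eq_square)
    ultimately show ?thesis by simp
  qed
  have "((\<lambda>t. sin t * cos (real k * t)) has_integral (G pi - G 0)) {0..pi}"
    by (rule ftc_real) (use pi_ge_zero d in auto)
  moreover have "cos (real k * pi) = 1" using assms by simp
  moreover have "G pi - G 0 = -2 / ((real k)^2 - 1)"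
    unfolding G_def using \<open>cos (real k * pi) = 1\<close> k1 by (simp add: field_simps)
  ultimately show ?thesis by simp
qed

lemma cont_fcirc: "continuous_on S f_circ"
  unfolding f_circ_def by (intro continuous_intros)

lemma sup_dist_ge:
  fixes p :: "real poly"
  assumes "x \<in> {-1..1}"
  shows "\<bar>f_circ x - poly p x\<bar> \<le> sup_dist f_circ p"
proof -
  have "continuous_on {-1..1} (\<lambda>x. \<bar>f_circ x - poly p x\<bar>)"
    using cont_fcirc by (intro continuous_intros) auto
  then have "compact ((\<lambda>x. \<bar>f_circ x - poly p x\<bar>) ` {-1..1})"
    by (intro compact_continuous_image) auto
  then have "bdd_above ((\<lambda>x. \<bar>f_circ x - poly p x\<bar>) ` {-1..1})"
    by (intro bounded_imp_bdd_above compact_imp_bounded)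
  then show ?thesis unfolding sup_dist_def using assms by (rule cSUP_upper2) auto
qed

lemma fcirc_cos:
  assumes "t \<in> {0..pi}"
  shows "f_circ (cos t) = sin t"
proof -
  have "1 - (cos t)^2 = (sin t)^2" by (simp add: sin_squared_eq)
  then have "f_circ (cos t) = \<bar>sin t\<bar>" unfolding f_circ_def by simp
  then show ?thesis using sin_ge_zero assms by auto
qed

definition Phi :: "nat \<Rightarrow> real \<Rightarrow> real" where
  "Phi n t = (\<Sum>j\<le>n. \<Sum>l\<le>n. (cos (real (4*n+2+2*j-2*l) * t) + cos (real (4*n+2+2*l-2*j) * t)) / 2)"

definition Fk :: "nat \<Rightarrow> real \<Rightarrow> real" where
  "Fk n t = (\<Sum>j\<le>n. cos (real (2*j) * t))^2 + (\<Sum>j\<le>n. sin (real (2*j) * t))^2"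

lemma Fk_nonneg: "Fk n t \<ge> 0"
  unfolding Fk_def by simp

lemma Fk_alt: "Fk n t = (\<Sum>j\<le>n. \<Sum>l\<le>n. cos (real (2*j) * t - real (2*l) * t))"
  unfolding Fk_def by (simp add: power2_eq_square sum_product cos_diff sum.distrib)

lemma Phi_eq: "Phi n t = cos (real (4*n+2) * t) * Fk n t"
proof -
  have "(cos (real (4*n+2+2*j-2*l) * t) + cos (real (4*n+2+2*l-2*j) * t)) / 2
      = cos (real (4*n+2) * t) * cos (real (2*j) * t - real (2*l) * t)" if "j \<le> n" "l \<le> n" for j l
  proof -
    have "real (4*n+2+2*j-2*l) * t = real (4*n+2) * t + (real (2*j) * t - real (2*l) * t)"
      using that by (simp add: of_nat_diff algebra_simps)
    moreover have "real (4*n+2+2*l-2*j) * t = real (4*n+2) * t - (real (2*j) * t - real (2*l) * t)"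
      using that by (simp add: of_nat_diff algebra_simps)
    ultimately show ?thesis by (simp only: cos_add cos_diff) simp
  qed
  then show ?thesis
    unfolding Phi_def Fk_alt sum_distrib_left by (intro sum.cong refl) auto
qed

lemma Phi_poly:
  fixes p :: "real poly"
  assumes "degree p \<le> n"
  shows "((\<lambda>t. poly p (cos t) * Phi n t) has_integral 0) {0..pi}"
proof -
  have "((\<lambda>t. \<Sum>j\<le>n. \<Sum>l\<le>n. (poly p (cos t) * cos (real (4*n+2+2*j-2*l) * t) + poly p (cos t) * cos (real (4*n+2+2*l-2*j) * t)) / 2)
     has_integral (\<Sum>j\<le>n. \<Sum>l\<le>n. (0 + 0) / 2)) {0..pi}"
    apply (rule has_integral_sum, simp)+
    apply (rule has_integral_divide)
    apply (rule has_integral_add)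
     apply (rule poly_cos_orth, use assms in force)
    apply (rule poly_cos_orth, use assms in force)
    done
  then show ?thesis
    unfolding Phi_def sum_distrib_left by (simp add: distrib_left)
qed

definition Jv :: "nat \<Rightarrow> real" where "Jv k = -2 / ((real k)^2 - 1)"

lemma Jv_le:
  assumes "2 \<le> k" "k \<le> K"
  shows "Jv k \<le> -2 / (real K)^2"
proof -
  have "(real k)^2 - 1 \<le> (real K)^2" using assms by (smt (verit) of_nat_le_iff power_mono of_nat_0_le_iff)
  moreover have "(real k)^2 \<ge> 2^2" using assms by (intro power_mono) auto
  ultimately show ?thesis unfolding Jv_def by (simp add: frac_le divide_le_cancel)
qed

lemma Phi_sin:
  "((\<lambda>t. sin t * Phi n t) has_integral
     (\<Sum>j\<le>n. \<Sum>l\<le>n. (Jv (4*n+2+2*j-2*l) + Jv (4*n+2+2*l-2*j)) / 2)) {0..pi}"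
proof -
  have "((\<lambda>t. \<Sum>j\<le>n. \<Sum>l\<le>n. (sin t * cos (real (4*n+2+2*j-2*l) * t) + sin t * cos (real (4*n+2+2*l-2*j) * t)) / 2)
     has_integral (\<Sum>j\<le>n. \<Sum>l\<le>n. (Jv (4*n+2+2*j-2*l) + Jv (4*n+2+2*l-2*j)) / 2)) {0..pi}"
    apply (rule has_integral_sum, simp)+
    apply (rule has_integral_divide)
    apply (rule has_integral_add)
    unfolding Jv_def
     apply (rule sin_cos_int, force)
    apply (rule sin_cos_int, force)
    done
  then show ?thesis
    unfolding Phi_def sum_distrib_left by (simp add: distrib_left)
qed

lemma Phi_sin_bound:
  "(\<Sum>j\<le>n. \<Sum>l\<le>n. (Jv (4*n+2+2*j-2*l) + Jv (4*n+2+2*l-2*j)) / 2) \<le> - (2 * (real n + 1)^2 / (real (6*n+2))^2)"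
proof -
  have "(\<Sum>j\<le>n. \<Sum>l\<le>n. (Jv (4*n+2+2*j-2*l) + Jv (4*n+2+2*l-2*j)) / 2)
     \<le> (\<Sum>j\<le>n. \<Sum>l\<le>n. (-2 / (real (6*n+2))^2 + -2 / (real (6*n+2))^2) / 2)"
    apply (intro sum_mono divide_right_mono add_mono Jv_le)
    by auto
  also have "\<dots> = (real n + 1) * ((real n + 1) * (-2 / (real (6*n+2))^2))"
    by (simp add: algebra_simps)
  also have "\<dots> = - (2 * (real n + 1)^2 / (real (6*n+2))^2)"
    by (simp add: power2_eq_square algebra_simps)
  finally show ?thesis .
qed

lemma Fk_int: "(Fk n has_integral (pi * (real n + 1))) {0..pi}"
proof -
  have "((\<lambda>t. \<Sum>j\<le>n. \<Sum>l\<le>n. cos (real_of_int (2*int j - 2*int l) * t)) has_integral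
     (\<Sum>j\<le>n. \<Sum>l\<le>n. (if j = l then pi else 0))) {0..pi}"
    apply (rule has_integral_sum, simp)+
    subgoal for j l
    proof (cases "j = l")
      case True
      have "((\<lambda>t. 1) has_integral ((\<lambda>t. t) pi - (\<lambda>t. t) 0)) {0..pi}"
        by (rule ftc_real) (use pi_ge_zero in \<open>auto intro!: derivative_eq_intros\<close>)
      then show ?thesis using True by simp
    next
      case False
      then show ?thesis using cos_int_zero_int[of "2*int j - 2*int l"] by simp
    qed
    done
  moreover have "(\<Sum>j\<le>n. \<Sum>l\<le>n. (if j = l then pi else 0)) = pi * (real n + 1)"
    by simp
  moreover have "Fk n = (\<lambda>t. \<Sum>j\<le>n. \<Sum>l\<le>n. cos (real_of_int (2*int j - 2*int l) * t))"
    unfolding Fk_alt by (rule ext) (simp add: algebra_simps)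
  ultimately show ?thesis by (simp add: algebra_simps)
qed

lemma sup_dist_lower:
  fixes p :: "real poly"
  assumes "degree p \<le> n"
  shows "sup_dist f_circ p \<ge> 2 * (real n + 1) / (pi * (real (6*n+2))^2)"
proof -
  define \<epsilon> where "\<epsilon> = sup_dist f_circ p"
  define S1 where "S1 = (\<Sum>j\<le>n. \<Sum>l\<le>n. (Jv (4*n+2+2*j-2*l) + Jv (4*n+2+2*l-2*j)) / 2)"
  have eb: "\<bar>sin t - poly p (cos t)\<bar> \<le> \<epsilon>" if "t \<in> {0..pi}" for t
    using sup_dist_ge[of "cos t" p] fcirc_cos[OF that] unfolding \<epsilon>_def by auto
  have e0: "\<epsilon> \<ge> 0" using eb[of 0] pi_ge_zero by fastforce
  have I: "((\<lambda>t. (sin t - poly p (cos t)) * Phi n t) has_integral (S1 - 0)) {0..pi}"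
    unfolding left_diff_distrib S1_def
    by (rule has_integral_diff[OF Phi_sin Phi_poly[OF assms]])
  have IF: "((\<lambda>t. \<epsilon> * Fk n t) has_integral (\<epsilon> * (pi * (real n + 1)))) {0..pi}"
    by (rule has_integral_mult_right[OF Fk_int])
  have "norm (integral {0..pi} (\<lambda>t. (sin t - poly p (cos t)) * Phi n t)) \<le> integral {0..pi} (\<lambda>t. \<epsilon> * Fk n t)"
  proof (rule integral_norm_bound_integral)
    show "(\<lambda>t. (sin t - poly p (cos t)) * Phi n t) integrable_on {0..pi}" using I by blast
    show "(\<lambda>t. \<epsilon> * Fk n t) integrable_on {0..pi}" using IF by blast
    fix t assume t: "t \<in> {0..pi}"
    have "norm ((sin t - poly p (cos t)) * Phi n t) = \<bar>sin t - poly p (cos t)\<bar> * \<bar>cos (real (4*n+2) * t)\<bar> * Fk n t"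
      by (simp add: Phi_eq abs_mult Fk_nonneg)
    also have "\<dots> \<le> \<epsilon> * 1 * Fk n t"
      by (intro mult_mono eb t Fk_nonneg e0) (auto simp: e0)
    finally show "norm ((sin t - poly p (cos t)) * Phi n t) \<le> \<epsilon> * Fk n t" by simp
  qed
  then have "\<bar>S1\<bar> \<le> \<epsilon> * (pi * (real n + 1))"
    using integral_unique[OF I] integral_unique[OF IF] integral_unique[OF Fk_int] by simp
  moreover have "S1 \<le> - (2 * (real n + 1)^2 / (real (6*n+2))^2)"
    unfolding S1_def by (rule Phi_sin_bound)
  ultimately have "2 * (real n + 1)^2 / (real (6*n+2))^2 \<le> \<epsilon> * (pi * (real n + 1))" by linarith
  then have "2 * (real n + 1)^2 / (real (6*n+2))^2 / (pi * (real n + 1)) \<le> \<epsilon>"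
    by (simp add: divide_le_eq mult.commute pi_gt_zero add_pos_nonneg)
  moreover have gen: "2 * a^2 / K^2 / (q * a) = 2 * a / (q * K^2)" if "a > 0" "q > 0" for a K q :: real
    using that by (simp add: field_simps power2_eq_square)
  have "2 * (real n + 1)^2 / (real (6*n+2))^2 / (pi * (real n + 1)) = 2 * (real n + 1) / (pi * (real (6*n+2))^2)"
    using gen[of "real n + 1" pi "real (6*n+2)"] pi_gt_zero by simp
  ultimately show ?thesis unfolding \<epsilon>_def by simp
qed

lemma mono_by_deriv:
  fixes f f' :: "real \<Rightarrow> real"
  assumes "a \<le> b" "\<And>x. a < x \<Longrightarrow> x < b \<Longrightarrow> (f has_real_derivative f' x) (at x)"
    "\<And>x. a < x \<Longrightarrow> x < b \<Longrightarrow> f' x \<ge> 0" "continuous_on {a..b} f"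
  shows "f a \<le> f b"
proof (rule DERIV_nonneg_imp_increasing_open[OF assms(1) _ assms(4)])
  fix x assume "a < x" "x < b"
  then show "\<exists>y. (f has_real_derivative y) (at x) \<and> 0 \<le> y"
    using assms(2,3) by blast
qed

fun cheb :: "nat \<Rightarrow> real poly" where
  "cheb 0 = 1"
| "cheb (Suc 0) = [:0, 1:]"
| "cheb (Suc (Suc n)) = [:0, 2:] * cheb (Suc n) - cheb n"

lemma cheb_cos: "poly (cheb n) (cos t) = cos (real n * t)"
proof (induction n rule: cheb.induct)
  case (3 n)
  have id: "cos (real (Suc (Suc n)) * t) + cos (real n * t) = 2 * cos t * cos (real (Suc n) * t)"
  proof -
    have "real (Suc (Suc n)) * t = real (Suc n) * t + t" "real n * t = real (Suc n) * t - t"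
      by (simp_all add: algebra_simps)
    then show ?thesis by (simp only: cos_add cos_diff) simp
  qed
  have "poly (cheb (Suc (Suc n))) (cos t) = 2 * cos t * poly (cheb (Suc n)) (cos t) - poly (cheb n) (cos t)"
    by simp
  also have "\<dots> = 2 * cos t * cos (real (Suc n) * t) - cos (real n * t)"
    by (simp only: 3)
  finally show ?case using id by linarith
qed auto

lemma degree_cheb: "degree (cheb n) \<le> n"
proof (induction n rule: cheb.induct)
  case (3 n)
  have "degree ([:0, 2:] * cheb (Suc n)) \<le> Suc (Suc n)"
    using degree_mult_le[of "[:0, 2:]" "cheb (Suc n)"] 3 by simp
  moreover have "degree (cheb n) \<le> Suc (Suc n)" using 3 by simp
  ultimately show ?case by (simp add: degree_diff_le)
qed auto

lemma sin_ge_half: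
  fixes x :: real
  assumes "0 \<le> x" "x \<le> 1"
  shows "sin x \<ge> x / 2"
proof -
  have d: "\<And>z. ((\<lambda>x::real. sin x - x / 2) has_real_derivative cos z - 1/2) (at z)"
    by (auto intro!: derivative_eq_intros)
  have nn: "cos z - 1/2 \<ge> 0" if y: "0 < z" "z < x" for z
  proof -
    have "pi / 3 \<ge> 1" using pi_gt3 by simp
    then have "cos z \<ge> cos (pi/3)"
      using y assms by (intro cos_monotone_0_pi_le) auto
    then show "cos z - 1/2 \<ge> 0" using cos_60 by simp
  qed
  have "(\<lambda>x::real. sin x - x / 2) 0 \<le> (\<lambda>x::real. sin x - x / 2) x"
    by (rule mono_by_deriv[OF assms(1) d nn]) (auto intro!: continuous_intros)
  then show ?thesis by simp
qed

definition Ap :: "nat \<Rightarrow> real poly" where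
  "Ap M = smult (1/2) (1 - pcompose (cheb M) [:1, -2:])"

lemma Ap_poly: "poly (Ap M) z = (1 - poly (cheb M) (1 - 2 * z)) / 2"
proof -
  have "poly [:1, -2:] z = 1 - 2 * z" by simp
  then show ?thesis unfolding Ap_def by (simp add: poly_pcompose mult.commute)
qed

lemma Ap_sin: "poly (Ap M) ((sin phi)^2) = (sin (real M * phi))^2"
proof -
  have "poly (cheb M) (1 - 2 * (sin phi)^2) = cos (real M * (2 * phi))"
    using cheb_cos[of M "2*phi"] by (simp only: cos_double_sin)
  also have "\<dots> = cos (2 * (real M * phi))"
    by (simp add: algebra_simps)
  also have "\<dots> = 1 - 2 * (sin (real M * phi))^2" by (rule cos_double_sin)
  finally show ?thesis unfolding Ap_poly by simp
qed

lemma Ap_0: "poly (Ap M) 0 = 0"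
  using Ap_sin[of M 0] by simp

lemma degree_Ap: "degree (Ap M) \<le> M"
proof -
  have "degree (pcompose (cheb M) [:1, -2:]) \<le> M"
    using degree_cheb[of M] by (simp add: degree_pcompose)
  then have "degree (1 - pcompose (cheb M) [:1, -2:]) \<le> M"
    by (intro degree_diff_le) auto
  then show ?thesis unfolding Ap_def by (meson degree_smult_le le_trans)
qed

definition Bp :: "nat \<Rightarrow> real poly" where
  "Bp M = Ap M div [:0, 1:]"

lemma Ap_Bp: "Ap M = [:0, 1:] * Bp M"
proof -
  have "[:- 0, 1:] dvd Ap M" using Ap_0 poly_eq_0_iff_dvd by blast
  then have "[:0, 1:] dvd Ap M" by simp
  then show ?thesis unfolding Bp_def by (rule dvd_mult_div_cancel[symmetric])
qed

lemma poly_Bp: "z * poly (Bp M) z = poly (Ap M) z"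
proof -
  have "poly (Ap M) z = poly ([:0, 1:] * Bp M) z" using Ap_Bp by metis
  then show ?thesis by simp
qed

lemma degree_Bp: "degree (Bp M) \<le> M"
proof (cases "Bp M = 0")
  case False
  then have "degree (Ap M) = 1 + degree (Bp M)"
    by (subst Ap_Bp) (simp add: degree_mult_eq)
  then show ?thesis using degree_Ap[of M] by simp
qed simp

definition kap :: "nat \<Rightarrow> real poly" where
  "kap M = Bp M * Bp M"

lemma degree_kap: "degree (kap M) \<le> 2 * M"
  unfolding kap_def using degree_mult_le[of "Bp M" "Bp M"] degree_Bp[of M] by simp

definition H0 :: "nat \<Rightarrow> real \<Rightarrow> real" where
  "H0 M y = (\<Sum>j\<le>degree (kap M). coeff (kap M) j / (2 * real j + 1) * y ^ (2 * j + 1))"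

definition Qp :: "nat \<Rightarrow> real poly" where
  "Qp M = (\<Sum>j\<le>degree (kap M). monom (coeff (kap M) j / (2 * real j + 1)) (j + 1))"

lemma pow_aux2: "((y::real)^2)^(j+1) = y * y^(2*j+1)"
proof -
  have e1: "(y^2)^(j+1) = y^(2*(j+1))" by (rule power_mult[symmetric])
  have e2: "2*(j+1) = Suc (2*j+1)" by simp
  show ?thesis unfolding e1 e2 power_Suc ..
qed

lemma poly_Qp: "poly (Qp M) (y^2) = y * H0 M y"
  unfolding Qp_def H0_def poly_sum poly_monom sum_distrib_left pow_aux2
  by (intro sum.cong refl) (simp only: mult.assoc mult.left_commute)

lemma degree_Qp: "degree (Qp M) \<le> 2 * M + 1"
  unfolding Qp_def
  apply (rule degree_sum_le, simp)
  using degree_monom_le degree_kap by (meson add_le_mono1 atMost_iff le_trans)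

lemma H0_deriv: "(H0 M has_real_derivative poly (kap M) (y^2)) (at y)"
proof -
  have t: "((\<lambda>y. coeff (kap M) j / (2 * real j + 1) * y ^ (2 * j + 1)) has_real_derivative
      coeff (kap M) j * (y^2) ^ j) (at y)" for j
  proof -
    have "((\<lambda>y. coeff (kap M) j / (2 * real j + 1) * y ^ (2 * j + 1)) has_real_derivative
      coeff (kap M) j / (2 * real j + 1) * (real (2 * j + 1) * y ^ (2 * j + 1 - Suc 0))) (at y)"
      by (intro DERIV_cmult DERIV_pow)
    moreover have "coeff (kap M) j / (2 * real j + 1) * (real (2 * j + 1) * y ^ (2 * j + 1 - Suc 0))
       = coeff (kap M) j * y ^ (2 * j)"
      by (simp add: field_simps add_pos_nonneg)
    moreover have "(y^2)^j = y ^ (2 * j)" by (simp add: power_mult)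
    ultimately show ?thesis by simp
  qed
  have "(H0 M has_real_derivative (\<Sum>j\<le>degree (kap M). coeff (kap M) j * (y^2) ^ j)) (at y)"
    unfolding H0_def by (rule DERIV_sum) (rule t)
  then show ?thesis by (simp add: poly_altdef)
qed

lemma H0_cont: "continuous_on S (H0 M)"
  unfolding H0_def by (intro continuous_intros)

lemma H0_0: "H0 M 0 = 0"
  unfolding H0_def by simp

lemma kap_nonneg: "poly (kap M) z \<ge> 0"
  unfolding kap_def poly_mult by (rule zero_le_square)

lemma Bp_at:
  assumes "0 < u" "u \<le> 1"
  shows "u^2 * poly (Bp M) (u^2) = (sin (real M * arcsin u))^2"
proof -
  have "sin (arcsin u) = u" using assms by simp
  then have "poly (Ap M) (u^2) = (sin (real M * arcsin u))^2"
    using Ap_sin[of M "arcsin u"] by simp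
  then show ?thesis using poly_Bp[of "u^2" M] by simp
qed

lemma Bp_bounds:
  assumes "0 < u" "u \<le> 1"
  shows "poly (Bp M) (u^2) \<ge> 0" "poly (Bp M) (u^2) \<le> 1 / u^2"
proof -
  have s: "0 \<le> (sin (real M * arcsin u))^2" "(sin (real M * arcsin u))^2 \<le> 1"
    using sin_cos_squared_add[of "real M * arcsin u"] zero_le_power2[of "cos (real M * arcsin u)"]
    by (simp, linarith)
  have u2: "u^2 > 0" using assms by simp
  from Bp_at[OF assms, of M] s u2 show "poly (Bp M) (u^2) \<ge> 0"
    by (metis zero_le_mult_iff not_less)
  from Bp_at[OF assms, of M] s u2 show "poly (Bp M) (u^2) \<le> 1 / u^2"
    by (simp add: field_simps mult.commute)
qed

lemma Bp_lower:
  assumes M: "M \<ge> 1" and u: "0 < u" "u \<le> 1 / (2 * real M)"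
  shows "poly (Bp M) (u^2) \<ge> (real M)^2 / 4"
proof -
  define phi where "phi = arcsin u"
  have u1: "u \<le> 1/2" using u M by (smt (verit) divide_le_eq_1_pos frac_le of_nat_1 of_nat_mono)
  have "sin (2 * u) \<ge> u" using sin_ge_half[of "2*u"] u u1 by simp
  then have "phi \<le> 2 * u" unfolding phi_def using u u1 pi_gt3
    by (subst arcsin_le_iff) auto
  have "phi \<ge> 0" unfolding phi_def using u u1 by (intro arcsin_nonneg) auto
  have "sin phi = u" unfolding phi_def using u u1 by simp
  then have "u \<le> phi" using sin_x_le_x[OF \<open>phi \<ge> 0\<close>] by simp
  have "real M * phi \<le> real M * (2 * u)" using \<open>phi \<le> 2 * u\<close> by (simp add: mult_left_mono)
  also have "\<dots> \<le> 1" using u M by (simp add: field_simps)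
  finally have Mp1: "real M * phi \<le> 1" .
  have "sin (real M * phi) \<ge> real M * phi / 2"
    using sin_ge_half[OF _ Mp1] \<open>phi \<ge> 0\<close> by simp
  moreover have "real M * phi / 2 \<ge> real M * u / 2" using \<open>u \<le> phi\<close> by (simp add: mult_left_mono)
  ultimately have "sin (real M * phi) \<ge> real M * u / 2" by linarith
  moreover have "real M * u / 2 \<ge> 0" using u by simp
  ultimately have "(sin (real M * phi))^2 \<ge> (real M * u / 2)^2"
    by (simp add: power_mono)
  then have "u^2 * poly (Bp M) (u^2) \<ge> u^2 * ((real M)^2 / 4)"
    using Bp_at[of u M] u u1 unfolding phi_def by (simp add: power_mult_distrib field_simps)
  then show ?thesis using u by (simp add: mult_le_cancel_left_pos)
qed

lemma kap_upper:
  assumes "0 < u" "u \<le> 1"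
  shows "poly (kap M) (u^2) \<le> 1 / u^4"
proof -
  have "poly (kap M) (u^2) = (poly (Bp M) (u^2))^2" unfolding kap_def by (simp add: power2_eq_square)
  also have "\<dots> \<le> (1 / u^2)^2" using Bp_bounds[OF assms, of M] by (intro power_mono) auto
  also have "\<dots> = 1 / u^4" by (simp add: power_divide power_mult[symmetric])
  finally show ?thesis .
qed

lemma kap_lower:
  assumes M: "M \<ge> 1" and u: "0 < u" "u \<le> 1 / (2 * real M)"
  shows "poly (kap M) (u^2) \<ge> (real M)^4 / 16"
proof -
  have "poly (kap M) (u^2) = (poly (Bp M) (u^2))^2" unfolding kap_def by (simp add: power2_eq_square)
  moreover have "(poly (Bp M) (u^2))^2 \<ge> ((real M)^2 / 4)^2"
    using Bp_lower[OF assms] by (intro power_mono) auto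
  moreover have "((real M)^2 / 4)^2 = (real M)^4 / 16" by (simp add: power_divide power_mult[symmetric])
  ultimately show ?thesis by simp
qed

lemma H0_mono:
  assumes "a \<le> b"
  shows "H0 M a \<le> H0 M b"
  by (rule mono_by_deriv[OF assms H0_deriv kap_nonneg H0_cont])

lemma H0_lower:
  assumes M: "M \<ge> 1"
  shows "H0 M 1 \<ge> (real M)^3 / 32"
proof -
  define c where "c = (real M)^4 / 16"
  define h where "h = 1 / (2 * real M)"
  have h0: "0 \<le> h" "h \<le> 1" unfolding h_def using M by (auto simp: field_simps)
  have d: "((\<lambda>u. H0 M u - c * u) has_real_derivative poly (kap M) (u^2) - c) (at u)" for u
    by (auto intro!: derivative_eq_intros H0_deriv)
  have nn: "0 \<le> poly (kap M) (u^2) - c" if "0 < u" "u < h" for u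
    using kap_lower[OF M, of u] that unfolding c_def h_def by simp
  have "(\<lambda>u. H0 M u - c * u) 0 \<le> (\<lambda>u. H0 M u - c * u) h"
    by (rule mono_by_deriv[OF h0(1) d nn]) (auto intro!: continuous_intros H0_cont)
  then have "H0 M h \<ge> c * h" by (simp add: H0_0)
  moreover have "c * h = (real M)^3 / 32" unfolding c_def h_def using M
    by (simp add: field_simps power_def)
  moreover have "H0 M h \<le> H0 M 1" using H0_mono h0 by simp
  ultimately show ?thesis by simp
qed

lemma H0_tail:
  assumes "0 < y" "y \<le> 1"
  shows "H0 M 1 - H0 M y \<le> 1 / (3 * y^3)"
proof -
  have "(\<lambda>u. H0 M u + 1 / (3 * u^3)) y \<ge> (\<lambda>u. H0 M u + 1 / (3 * u^3)) 1"
  proof (rule DERIV_nonpos_imp_decreasing_open[OF assms(2)])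
    fix u assume u: "y < u" "u < 1"
    then have u0: "u > 0" using assms by simp
    have "((\<lambda>u. H0 M u + 1 / (3 * u^3)) has_real_derivative poly (kap M) (u^2) - 1 / u^4) (at u)"
    proof -
      have "((\<lambda>u. H0 M u + 1 / (3 * u^3)) has_real_derivative poly (kap M) (u^2) + (- (3 * (real 3 * u^2)) / (3 * u^3)^2)) (at u)"
        using u0 by (auto intro!: derivative_eq_intros H0_deriv simp: power2_eq_square)
      moreover have "- (3 * (real 3 * u^2)) / (3 * u^3)^2 = - 1 / u^4"
        using u0 by (simp add: field_simps power2_eq_square power_def)
      ultimately show ?thesis by simp
    qed
    moreover have "poly (kap M) (u^2) - 1 / u^4 \<le> 0" using kap_upper[of u M] u u0 by simp
    ultimately show "\<exists>d. ((\<lambda>u. H0 M u + 1 / (3 * u^3)) has_real_derivative d) (at u) \<and> d \<le> 0" by blast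
  next
    show "continuous_on {y..1} (\<lambda>u. H0 M u + 1 / (3 * u^3))"
      using assms by (intro continuous_intros H0_cont) auto
  qed
  then show ?thesis by simp
qed

definition qM :: "nat \<Rightarrow> real poly" where
  "qM M = smult (1 / H0 M 1) (pcompose (Qp M) [:1, 0, -1:])"

lemma degree_qM: "degree (qM M) \<le> 4 * M + 2"
proof -
  have "degree (pcompose (Qp M) [:1, 0, -1:]) = degree (Qp M) * 2"
    by (simp add: degree_pcompose)
  also have "\<dots> \<le> (2 * M + 1) * 2" using degree_Qp[of M] by simp
  finally have "degree (pcompose (Qp M) [:1, 0, -1:]) \<le> 4 * M + 2" by simp
  moreover have "degree (qM M) \<le> degree (pcompose (Qp M) [:1, 0, -1:])"
    unfolding qM_def by (rule degree_smult_le)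
  ultimately show ?thesis by simp
qed

lemma poly_qM:
  assumes "x \<in> {-1..1}"
  shows "poly (qM M) x = sqrt (1 - x^2) * H0 M (sqrt (1 - x^2)) / H0 M 1"
proof -
  have "\<bar>x\<bar> \<le> 1" using assms by auto
  then have x2: "x^2 \<le> 1" by (simp add: abs_square_le_1)
  have "(sqrt (1 - x^2))^2 = 1 - x^2" using x2 by simp
  moreover have "poly [:1, 0, -1:] x = 1 - x^2" by (simp add: power2_eq_square)
  ultimately have "poly (pcompose (Qp M) [:1, 0, -1:]) x = sqrt (1 - x^2) * H0 M (sqrt (1 - x^2))"
    using poly_Qp[of M "sqrt (1 - x^2)"] by (simp add: poly_pcompose)
  then show ?thesis unfolding qM_def by simp
qed

lemma err_bounds:
  assumes M: "M \<ge> 1" and x: "x \<in> {-1..1}"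
  shows "0 \<le> f_circ x - poly (qM M) x"
    and "f_circ x - poly (qM M) x \<le> 22 / ((real M)^3 * (1 - x^2) + real M)"
proof -
  define y where "y = sqrt (1 - x^2)"
  define D where "D = H0 M 1"
  define e where "e = f_circ x - poly (qM M) x"
  have "\<bar>x\<bar> \<le> 1" using x by auto
  then have x2: "x^2 \<le> 1" by (simp add: abs_square_le_1)
  have y0: "0 \<le> y" and y1: "y \<le> 1" unfolding y_def using x2 by auto
  have yy: "y^2 = 1 - x^2" unfolding y_def using x2 by simp
  have Mr: "real M \<ge> 1" using M by simp
  have DM: "D \<ge> (real M)^3 / 32" unfolding D_def using H0_lower[OF M] .
  have Dpos: "D > 0" using DM Mr by (smt (verit) divide_pos_pos one_le_power zero_less_power)
  have H0y: "0 \<le> H0 M y" using H0_mono[OF y0, of M] H0_0 by simp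
  have H1y: "H0 M y \<le> D" unfolding D_def using H0_mono[OF y1] .
  have e_eq: "e = y * (D - H0 M y) / D"
    unfolding e_def poly_qM[OF x] f_circ_def D_def y_def[symmetric] using Dpos unfolding D_def
    by (simp add: field_simps)
  have e0: "0 \<le> e" unfolding e_eq using y0 H1y Dpos by simp
  have ey: "e \<le> y" unfolding e_eq using y0 H0y Dpos
    by (simp add: divide_le_eq mult_left_mono)
  define K where "K = (real M)^3 * y^2 + real M"
  have Kpos: "K > 0" unfolding K_def using Mr by (simp add: add_nonneg_pos)
  have eK: "e * K \<le> 22"
  proof (cases "real M * y \<ge> 1")
    case True
    then have ypos: "y > 0" using y0 by (metis mult_zero_right not_one_le_zero order_le_less)
    have th: "D - H0 M y \<le> 1 / (3 * y^3)" unfolding D_def using H0_tail[OF ypos y1] .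
    have "e * D = y * (D - H0 M y)" unfolding e_eq using Dpos by simp
    also have "\<dots> \<le> y * (1 / (3 * y^3))" by (rule mult_left_mono[OF th y0])
    finally have "e * D \<le> y * (1 / (3 * y^3))" .
    also have "\<dots> = 1 / (3 * y^2)" using ypos by (simp add: field_simps power_def)
    finally have "e * D * (3 * y^2) \<le> 1" using ypos by (simp add: field_simps)
    moreover have "e * ((real M)^3 / 32) * (3 * y^2) \<le> e * D * (3 * y^2)"
      using DM e0 ypos by (intro mult_right_mono mult_left_mono) auto
    ultimately have e3: "e * (3 * (real M)^3 * y^2) \<le> 32" by (simp add: field_simps)
    have "(real M * y)^2 \<ge> 1" using True by (simp add: one_le_power)
    then have "real M \<le> real M * (real M * y)^2" using Mr by simp
    then have "K \<le> 2 * (real M)^3 * y^2" unfolding K_def by (simp add: power_def algebra_simps)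
    then have "e * K \<le> e * (2 * (real M)^3 * y^2)" using e0 by (simp add: mult_left_mono)
    also have "\<dots> = (2/3) * (e * (3 * (real M)^3 * y^2))" by simp
    also have "\<dots> \<le> (2/3) * 32" by (rule mult_left_mono[OF e3]) simp
    finally show ?thesis by simp
  next
    case False
    then have My: "real M * y < 1" by simp
    have "(real M * y)^2 \<le> 1" using My y0 Mr by (simp add: power_le_one)
    then have "(real M)^3 * y^2 \<le> real M" using Mr by (simp add: power_def algebra_simps)
    then have "K \<le> 2 * real M" unfolding K_def by simp
    then have "e * K \<le> y * (2 * real M)" using e0 ey Kpos by (meson mult_mono' less_imp_le order_trans mult_left_mono y0)
    also have "\<dots> = 2 * (real M * y)" by simp
    also have "\<dots> \<le> 2" using My by simp
    finally show ?thesis by simp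
  qed
  show "0 \<le> f_circ x - poly (qM M) x" using e0 unfolding e_def .
  have "e \<le> 22 / K" using eK Kpos by (simp add: pos_le_divide_eq)
  then show "f_circ x - poly (qM M) x \<le> 22 / ((real M)^3 * (1 - x^2) + real M)"
    unfolding e_def K_def yy .
qed

lemma ftc_real2:
  fixes F f :: "real \<Rightarrow> real"
  assumes "a \<le> b" and "\<And>x. x \<in> {a..b} \<Longrightarrow> (F has_real_derivative f x) (at x)"
  shows "(f has_integral (F b - F a)) {a..b}"
  apply (rule fundamental_theorem_of_calculus[OF assms(1)])
  using assms(2) by (metis has_field_derivative_at_within has_real_derivative_iff_has_vector_derivative)

lemma g_int:
  assumes M: "M \<ge> 1"
  shows "((\<lambda>x::real. 22 / ((real M)^3 * (1 - x) + real M) + 22 / ((real M)^3 * (1 + x) + real M))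
          has_integral (44 / (real M)^3 * ln (2 * (real M)^2 + 1))) {-1..1}"
proof -
  define m where "m = real M"
  have m1: "m \<ge> 1" unfolding m_def using M by simp
  define G where "G x = 22 / m^3 * (ln (m^3 * (1 + x) + m) - ln (m^3 * (1 - x) + m))" for x :: real
  have pos1: "m^3 * (1 + x) + m > 0" and pos2: "m^3 * (1 - x) + m > 0" if "x \<in> {-1..1}" for x :: real
    using that m1 by (auto intro!: add_nonneg_pos mult_nonneg_nonneg)
  have "((\<lambda>x::real. 22 / (m^3 * (1 - x) + m) + 22 / (m^3 * (1 + x) + m)) has_integral (G 1 - G (-1))) {-1..1}"
  proof (rule ftc_real2)
    fix x :: real assume x: "x \<in> {-1..1}"
    have mp: "m > 0" using m1 by simp
    have a0: "m^3 * (1 + x) + m > 0" "m^3 * (1 - x) + m > 0" using pos1[OF x] pos2[OF x] by auto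
    have da: "((\<lambda>x. ln (m^3 * (1 + x) + m)) has_real_derivative m^3 / (m^3 * (1 + x) + m)) (at x)"
      using a0 by (auto intro!: derivative_eq_intros)
    have db: "((\<lambda>x. ln (m^3 * (1 - x) + m)) has_real_derivative - (m^3) / (m^3 * (1 - x) + m)) (at x)"
      using a0 by (auto intro!: derivative_eq_intros)
    have "(G has_real_derivative 22 / m^3 * (m^3 / (m^3 * (1 + x) + m) - - (m^3) / (m^3 * (1 - x) + m))) (at x)"
      unfolding G_def by (intro DERIV_cmult DERIV_diff da db)
    moreover have "22 / m^3 * (m^3 / A - - (m^3) / B) = 22 / B + 22 / A" if "A > 0" "B > 0" for A B
      using that mp by (simp add: field_simps)
    ultimately show "(G has_real_derivative 22 / (m^3 * (1 - x) + m) + 22 / (m^3 * (1 + x) + m)) (at x)"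
      using a0 by simp
  qed simp
  moreover have "G 1 - G (-1) = 44 / m^3 * ln (2 * m^2 + 1)"
  proof -
    have a: "m^3 * 2 + m > 0" using m1 by (simp add: add_pos_pos)
    have "G 1 - G (-1) = 44 / m^3 * (ln (m^3 * 2 + m) - ln m)"
      unfolding G_def by (simp add: algebra_simps)
    also have "ln (m^3 * 2 + m) - ln m = ln ((m^3 * 2 + m) / m)"
      using a m1 by (simp add: ln_div)
    also have "(m^3 * 2 + m) / m = 2 * m^2 + 1"
      using m1 by (simp add: field_simps power_def)
    finally show ?thesis .
  qed
  ultimately show ?thesis unfolding m_def by simp
qed

lemma L1_qM:
  assumes M: "M \<ge> 1"
  shows "L1_dist f_circ (qM M) \<le> 44 / (real M)^3 * ln (2 * (real M)^2 + 1)"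
proof -
  let ?g = "\<lambda>x. 22 / ((real M)^3 * (1 - x) + real M) + 22 / ((real M)^3 * (1 + x) + real M)"
  have "integral {-1..1} (\<lambda>x. \<bar>f_circ x - poly (qM M) x\<bar>) \<le> integral {-1..1} ?g"
  proof (rule integral_le)
    show "(\<lambda>x. \<bar>f_circ x - poly (qM M) x\<bar>) integrable_on {-1..1}"
      using cont_fcirc by (intro integrable_continuous_interval continuous_intros) auto
    show "?g integrable_on {-1..1}" using g_int[OF M] by blast
    fix x :: real assume x: "x \<in> {-1..1}"
    have Mr: "real M \<ge> 1" using M by simp
    have e: "\<bar>f_circ x - poly (qM M) x\<bar> \<le> 22 / ((real M)^3 * (1 - x^2) + real M)"
      using err_bounds[OF M x] by simp
    have p1: "0 < (real M)^3 * (1 - x) + real M" "0 < (real M)^3 * (1 + x) + real M"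
      using x Mr by (auto intro!: add_nonneg_pos)
    show "\<bar>f_circ x - poly (qM M) x\<bar> \<le> ?g x"
    proof (cases "x \<ge> 0")
      case True
      have "x * x \<le> x * 1" using True x by (intro mult_left_mono) auto
      then have "1 - x \<le> 1 - x^2" by (simp add: power2_eq_square)
      then have "(real M)^3 * (1 - x) + real M \<le> (real M)^3 * (1 - x^2) + real M"
        by (simp add: mult_left_mono)
      then have "22 / ((real M)^3 * (1 - x^2) + real M) \<le> 22 / ((real M)^3 * (1 - x) + real M)"
        using p1 by (intro divide_left_mono) auto
      moreover have "0 \<le> 22 / ((real M)^3 * (1 + x) + real M)" using p1 by simp
      ultimately show ?thesis using e by linarith
    next
      case False
      have "(-x) * (-x) \<le> (-x) * 1" using False x by (intro mult_left_mono) auto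
      then have "1 + x \<le> 1 - x^2" by (simp add: power2_eq_square)
      then have "(real M)^3 * (1 + x) + real M \<le> (real M)^3 * (1 - x^2) + real M"
        by (simp add: mult_left_mono)
      then have "22 / ((real M)^3 * (1 - x^2) + real M) \<le> 22 / ((real M)^3 * (1 + x) + real M)"
        using p1 by (intro divide_left_mono) auto
      moreover have "0 \<le> 22 / ((real M)^3 * (1 - x) + real M)" using p1 by simp
      ultimately show ?thesis using e by linarith
    qed
  qed
  then show ?thesis unfolding L1_dist_def using integral_unique[OF g_int[OF M]] by simp
qed

lemma markov:
  fixes g :: "real \<Rightarrow> real"
  assumes t: "t > 0" and gc: "continuous_on {-1..1} g" and g0: "\<And>x. x \<in> {-1..1} \<Longrightarrow> g x \<ge> 0"
  shows "measure lebesgue {x \<in> {-1..1}. t \<le> g x} \<le> integral {-1..1} g / t"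
proof -
  define S where "S = {x \<in> {-1..1}. t \<le> g x}"
  have "closed S" unfolding S_def
    by (rule continuous_on_closed_Collect_le) (auto intro!: continuous_intros gc)
  moreover have "bounded S" unfolding S_def by (rule bounded_subset[of "{-1..1}"]) auto
  ultimately have "compact S" by (simp add: compact_eq_bounded_closed)
  then have Sm: "S \<in> lmeasurable" by (rule lmeasurable_compact)
  have S1: "S \<inter> {-1..1} = S" unfolding S_def by auto
  have mS: "measure lebesgue S = integral {-1..1} (\<lambda>x. if x \<in> S then 1 else 0)"
    using lmeasure_integral[OF Sm] integral_restrict_Int[of "{-1..1}" S "\<lambda>x. 1::real"] S1 by simp
  have iS: "(\<lambda>x. if x \<in> S then 1 else 0::real) integrable_on {-1..1}"
    using Sm S1 by (simp add: integrable_restrict_Int lmeasurable_iff_integrable_on)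
  have "integral {-1..1} (\<lambda>x. t * (if x \<in> S then 1 else 0)) \<le> integral {-1..1} g"
  proof (rule integral_le)
    show "(\<lambda>x. t * (if x \<in> S then 1 else 0)) integrable_on {-1..1}"
      using has_integral_mult_right[OF integrable_integral[OF iS], of t] by blast
    show "g integrable_on {-1..1}" using gc by (rule integrable_continuous_interval)
    fix x :: real assume x: "x \<in> {-1..1}"
    show "t * (if x \<in> S then 1 else 0) \<le> g x" using g0[OF x] x unfolding S_def by auto
  qed
  then have "t * measure lebesgue S \<le> integral {-1..1} g" unfolding mS by simp
  then show ?thesis unfolding S_def[symmetric] using t by (simp add: field_simps)
qed

lemma measure_bound:
  fixes pL1 pLinf :: "real poly" and n :: nat
  assumes L1: "is_best_L1 f_circ n pL1" and Linf: "is_best_Linf f_circ n pLinf" and n: "n \<ge> 6"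
  defines "M \<equiv> (n - 2) div 4"
  shows "measure lebesgue {x \<in> {-1..1}. \<bar>f_circ x - poly pL1 x\<bar> \<ge> sup_dist f_circ pLinf / 2}
         \<le> 2 * (44 / (real M)^3 * ln (2 * (real M)^2 + 1)) / (2 * (real n + 1) / (pi * (real (6*n+2))^2))"
proof -
  define E where "E = sup_dist f_circ pLinf"
  define lb where "lb = 2 * (real n + 1) / (pi * (real (6*n+2))^2)"
  have lbpos: "lb > 0" unfolding lb_def by (simp add: pi_gt_zero)
  have degLinf: "degree pLinf \<le> n" using Linf unfolding is_best_Linf_def by simp
  have "E \<ge> lb" unfolding E_def lb_def by (rule sup_dist_lower[OF degLinf])
  then have Epos: "E > 0" using lbpos by simp
  have M1: "M \<ge> 1" unfolding M_def using n by simp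
  have degq: "degree (qM M) \<le> n" using degree_qM[of M] n unfolding M_def by simp
  have L1b: "L1_dist f_circ pL1 \<le> 44 / (real M)^3 * ln (2 * (real M)^2 + 1)"
    using L1 degq L1_qM[OF M1] unfolding is_best_L1_def by (meson order_trans)
  have gc: "continuous_on {-1..1} (\<lambda>x. \<bar>f_circ x - poly pL1 x\<bar>)"
    using cont_fcirc by (intro continuous_intros) auto
  have "measure lebesgue {x \<in> {-1..1}. E / 2 \<le> \<bar>f_circ x - poly pL1 x\<bar>}
      \<le> integral {-1..1} (\<lambda>x. \<bar>f_circ x - poly pL1 x\<bar>) / (E / 2)"
    by (rule markov) (use Epos gc in auto)
  also have "\<dots> = 2 * L1_dist f_circ pL1 / E" unfolding L1_dist_def by simp
  also have "\<dots> \<le> 2 * (44 / (real M)^3 * ln (2 * (real M)^2 + 1)) / E"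
    using divide_right_mono[OF mult_left_mono[OF L1b, of 2]] Epos by simp
  also have "\<dots> \<le> 2 * (44 / (real M)^3 * ln (2 * (real M)^2 + 1)) / lb"
  proof (rule divide_left_mono)
    show "0 \<le> 2 * (44 / (real M)^3 * ln (2 * (real M)^2 + 1))" using M1 by simp
  qed (use \<open>E \<ge> lb\<close> lbpos in auto)
  finally show ?thesis unfolding E_def lb_def by simp
qed

lemma final_arith:
  fixes n :: nat
  assumes n: "n \<ge> 10"
  defines "M \<equiv> (n - 2) div 4"
  shows "2 * (44 / (real M)^3 * ln (2 * (real M)^2 + 1)) / (2 * (real n + 1) / (pi * (real (6*n+2))^2))
         \<le> 17301504 * (ln (real n) / (real n)^2)"
proof -
  define m where "m = real M"
  define N where "N = real n"
  have N10: "N \<ge> 10" unfolding N_def using n by simp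
  have h1: "4 * M + 5 \<ge> n" unfolding M_def by presburger
  have h2: "4 * M \<le> n" unfolding M_def by presburger
  have m1: "4 * m + 5 \<ge> N" unfolding m_def N_def using h1 by (metis of_nat_add of_nat_le_iff of_nat_mult of_nat_numeral)
  have m2: "4 * m \<le> N" unfolding m_def N_def using h2 by (metis of_nat_le_iff of_nat_mult of_nat_numeral)
  have mN: "m \<ge> N / 8" using m1 N10 by linarith
  have mpos: "m > 0" using mN N10 by linarith
  define L where "L = ln (2 * m^2 + 1)"
  have L0: "L \<ge> 0" unfolding L_def by simp
  have "2 * m^2 + 1 \<le> N^3"
  proof -
    have "m^2 \<le> (N/4)^2" using m2 mpos by (intro power_mono) auto
    then have "2 * m^2 + 1 \<le> N^2 / 8 + 1" by (simp add: power_divide)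
    also have "\<dots> \<le> N^2 * N"
    proof -
      have "N^2 * 10 \<le> N^2 * N" using N10 by (intro mult_left_mono) auto
      moreover have "N^2 \<ge> 10^2" using N10 by (intro power_mono) auto
      ultimately show ?thesis by simp
    qed
    finally show ?thesis by (simp add: power_def)
  qed
  moreover have p: "2 * m^2 + 1 > 0" using zero_le_power2[of m] by linarith
  ultimately have "L \<le> ln (N^3)" unfolding L_def using N10 by (subst ln_le_cancel_iff) auto
  also have "\<dots> = 3 * ln N" using N10 by (simp add: ln_realpow)
  finally have L3: "L \<le> 3 * ln N" .
  have lnN: "ln N \<ge> 0" using N10 by simp
  have s: "(6 * N + 2)^2 \<le> (8 * N)^2" using N10 by (intro power_mono) auto
  have mm: "m^3 \<ge> (N/8)^3" using mN N10 by (intro power_mono) auto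
  have lhs: "2 * (44 / m^3 * L) / (2 * (N + 1) / (pi * (6 * N + 2)^2)) = (44 * L * pi * (6 * N + 2)^2) / (m^3 * (N + 1))"
  proof -
    have gen: "2 * (44 / a * L) / (2 * b / (p * c)) = (44 * L * p * c) / (a * b)"
      if "a > 0" "b > 0" "p > 0" "c > 0" for a b p c L :: real
      using that by (simp add: field_simps)
    show ?thesis using mpos N10 pi_gt_zero by (intro gen) auto
  qed
  have "2 * (44 / m^3 * L) / (2 * (N + 1) / (pi * (6 * N + 2)^2)) = (44 * L * pi * (6 * N + 2)^2) / (m^3 * (N + 1))"
    by (rule lhs)
  also have "\<dots> \<le> (44 * (3 * ln N) * 4 * (8 * N)^2) / ((N/8)^3 * N)"
  proof (rule frac_le)
    show "0 \<le> 44 * (3 * ln N) * 4 * (8 * N)^2" using lnN by simp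
    show "44 * L * pi * (6 * N + 2)^2 \<le> 44 * (3 * ln N) * 4 * (8 * N)^2"
      using L3 L0 s pi_less_4 lnN by (intro mult_mono) auto
    show "0 < (N/8)^3 * N" using N10 by simp
    show "(N/8)^3 * N \<le> m^3 * (N + 1)" using mm N10 mpos by (intro mult_mono) auto
  qed
  also have "\<dots> = 17301504 * (ln N / N^2)" using N10 by (simp add: field_simps power_def)
  finally have X: "2 * (44 / m^3 * L) / (2 * (N + 1) / (pi * (6 * N + 2)^2)) \<le> 17301504 * (ln N / N^2)" .
  have e6: "real (6*n+2) = 6 * real n + 2" by simp
  show ?thesis unfolding e6 using X unfolding m_def N_def L_def .
qed

theorem mainTheorem6:
  fixes pL1 pLinf :: "nat \<Rightarrow> real poly"
  assumes "\<And>n. is_best_L1 f_circ n (pL1 n)"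
      and "\<And>n. is_best_Linf f_circ n (pLinf n)"
  shows "(\<lambda>n. measure lebesgue
            {x \<in> {-1..1}. \<bar>f_circ x - poly (pL1 n) x\<bar> \<ge> sup_dist f_circ (pLinf n) / 2})
         \<in> O(\<lambda>n. ln (real n) / (real n)\<^sup>2)"
proof (rule bigoI)
  show "\<forall>\<^sub>F n in at_top. norm (measure lebesgue
            {x \<in> {-1..1}. \<bar>f_circ x - poly (pL1 n) x\<bar> \<ge> sup_dist f_circ (pLinf n) / 2})
        \<le> 17301504 * norm (ln (real n) / (real n)\<^sup>2)"
    unfolding eventually_at_top_linorder
  proof (intro exI allI impI)
    fix n :: nat assume n: "n \<ge> 10"
    have "norm (measure lebesgue
            {x \<in> {-1..1}. \<bar>f_circ x - poly (pL1 n) x\<bar> \<ge> sup_dist f_circ (pLinf n) / 2})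
        = measure lebesgue
            {x \<in> {-1..1}. \<bar>f_circ x - poly (pL1 n) x\<bar> \<ge> sup_dist f_circ (pLinf n) / 2}"
      by simp
    also have "\<dots> \<le> 17301504 * (ln (real n) / (real n)^2)"
    proof -
      have n6: "n \<ge> 6" using n by simp
      show ?thesis by (rule order_trans[OF measure_bound[OF assms(1)[of n] assms(2)[of n] n6] final_arith[OF n]])
    qed
    also have "\<dots> = 17301504 * norm (ln (real n) / (real n)\<^sup>2)"
      using n by simp
    finally show "norm (measure lebesgue
            {x \<in> {-1..1}. \<bar>f_circ x - poly (pL1 n) x\<bar> \<ge> sup_dist f_circ (pLinf n) / 2})
        \<le> 17301504 * norm (ln (real n) / (real n)\<^sup>2)" .
  qed
qed

end
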